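(* Let $(V,\mathcal H,\iota,W)$ be an abelian functional theory with set of weights $\Omega$, and let $\rho\in\mathrm{conv}(\Omega)$. If $\rho$ is pure-state $v$-representable and does not lie in the convex hull of any $\dim\mathrm{conv}(\Omega)$ weights, then $\rho$ is uniquely $v$-representable.
   Context: A generalized functional theory is a tuple $(V,\mathcal H,\iota,W)$ with $V$ a finite-dimensional real vector space, $\mathcal H$ a finite-dimensional complex Hilbert space, $\iota:V\to i\mathfrak u(\mathcal H)$ linear into the Hermitian operators, $W$ Hermitian; it is abelian if all $\iota(v)$ commute. States are linear functionals via the trace, $\iota^*$ is the dual map. A weight is $\alpha\in V^*$ such that some nonzero $\psi$ satisfies $\iota(v)\psi=\langle\alpha,v\rangle\psi$ for all $v$; $\Omega$ is the set of weights. $\mathbf G_p(v)$ is the set of pure ground states of $\iota(v)+W$. $\rho$ is pure-state $v$-representable if $\rho\in\iota^*(\mathbf G_p(v))$ for some $v$, and uniquely $v$-representable if moreover every $v'$ with $\rho\in\iota^*(\mathbf G_p(v'))$ satisfies $\iota(v')-\iota(v)\propto\mathbb 1$. *)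

theory Defs
  imports "HOL-Analysis.Analysis"
begin

text \<open>V is modelled as a Euclidean
space 'v; the dual space V* is identified with 'v via the inner product,
so a functional alpha acts as v \<mapsto> alpha \<bullet> v.\<close>

definition cinner :: "complex^'n \<Rightarrow> complex^'n \<Rightarrow> complex" where
  "cinner x y = (\<Sum>i\<in>UNIV. cnj (x$i) * y$i)"

definition hermitian :: "complex^'n^'n \<Rightarrow> bool" where
  "hermitian A \<longleftrightarrow> (\<forall>i j. A$i$j = cnj (A$j$i))"

definition functional_theory :: "('v::euclidean_space \<Rightarrow> complex^'n^'n) \<Rightarrow> complex^'n^'n \<Rightarrow> bool" where
  "functional_theory \<iota> W \<longleftrightarrow> linear \<iota> \<and> (\<forall>v. hermitian (\<iota> v)) \<and> hermitian W"

definition abelian :: "('v::euclidean_space \<Rightarrow> complex^'n^'n) \<Rightarrow> bool" where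
  "abelian \<iota> \<longleftrightarrow> (\<forall>u w. \<iota> u ** \<iota> w = \<iota> w ** \<iota> u)"

definition weights :: "('v::euclidean_space \<Rightarrow> complex^'n^'n) \<Rightarrow> 'v set" where
  "weights \<iota> = {\<alpha>. \<exists>\<psi>. \<psi> \<noteq> 0 \<and> (\<forall>v. \<iota> v *v \<psi> = complex_of_real (\<alpha> \<bullet> v) *s \<psi>)}"

definition pure_ground_states :: "complex^'n^'n \<Rightarrow> (complex^'n) set" where
  "pure_ground_states H = {\<psi>. cinner \<psi> \<psi> = 1 \<and>
     (\<exists>E::real. H *v \<psi> = complex_of_real E *s \<psi> \<and>
        (\<forall>\<phi> E'::complex. \<phi> \<noteq> 0 \<longrightarrow> H *v \<phi> = E' *s \<phi> \<longrightarrow> E \<le> Re E'))}"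

definition Gp :: "('v::euclidean_space \<Rightarrow> complex^'n^'n) \<Rightarrow> complex^'n^'n \<Rightarrow> 'v \<Rightarrow> (complex^'n) set" where
  "Gp \<iota> W v = pure_ground_states (\<iota> v + W)"

text \<open>Dual map iota^* applied to the pure state |psi><psi|: the functional
v \<mapsto> tr(|psi><psi| iota(v)) = <psi, iota(v) psi>, represented in 'v.\<close>
definition dual_pure :: "('v::euclidean_space \<Rightarrow> complex^'n^'n) \<Rightarrow> complex^'n \<Rightarrow> 'v \<Rightarrow> bool" where
  "dual_pure \<iota> \<psi> \<rho> \<longleftrightarrow> (\<forall>u. complex_of_real (\<rho> \<bullet> u) = cinner \<psi> (\<iota> u *v \<psi>))"

definition pure_v_rep_by :: "('v::euclidean_space \<Rightarrow> complex^'n^'n) \<Rightarrow> complex^'n^'n \<Rightarrow> 'v \<Rightarrow> 'v \<Rightarrow> bool" where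
  "pure_v_rep_by \<iota> W \<rho> v \<longleftrightarrow> (\<exists>\<psi>\<in>Gp \<iota> W v. dual_pure \<iota> \<psi> \<rho>)"

definition pure_v_representable :: "('v::euclidean_space \<Rightarrow> complex^'n^'n) \<Rightarrow> complex^'n^'n \<Rightarrow> 'v \<Rightarrow> bool" where
  "pure_v_representable \<iota> W \<rho> \<longleftrightarrow> (\<exists>v. pure_v_rep_by \<iota> W \<rho> v)"

definition uniquely_v_representable :: "('v::euclidean_space \<Rightarrow> complex^'n^'n) \<Rightarrow> complex^'n^'n \<Rightarrow> 'v \<Rightarrow> bool" where
  "uniquely_v_representable \<iota> W \<rho> \<longleftrightarrow> (\<exists>v. pure_v_rep_by \<iota> W \<rho> v \<and>
     (\<forall>v'. pure_v_rep_by \<iota> W \<rho> v' \<longrightarrow> (\<exists>c::complex. \<iota> v' - \<iota> v = mat c)))"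

end

theory Submission
  imports Defs
begin

lemma re_cinner: "Re (cinner x y) = x \<bullet> y"
  unfolding cinner_def inner_vec_def inner_complex_def by (simp add: Re_sum)

lemma herm_cinner:
  assumes "hermitian A" shows "cinner x (A *v y) = cinner (A *v x) y"
proof -
  have h: "cnj (A$j$i) = A$i$j" for i j using assms unfolding hermitian_def
    by (metis complex_cnj_cnj)
  have "cinner x (A *v y) = (\<Sum>i\<in>UNIV. \<Sum>j\<in>UNIV. cnj (x$i) * (A$i$j * y$j))"
    unfolding cinner_def matrix_vector_mult_def by (simp only: vec_lambda_beta sum_distrib_left)
  also have "\<dots> = (\<Sum>j\<in>UNIV. \<Sum>i\<in>UNIV. cnj (x$i) * (A$i$j * y$j))" by (rule sum.swap)
  also have "\<dots> = (\<Sum>j\<in>UNIV. \<Sum>i\<in>UNIV. cnj (A$j$i * x$i) * y$j)"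
  proof (rule sum.cong[OF refl], rule sum.cong[OF refl])
    fix i j
    show "cnj (x$i) * (A$i$j * y$j) = cnj (A$j$i * x$i) * y$j"
      unfolding complex_cnj_mult h by (simp only: mult_ac)
  qed
  also have "\<dots> = cinner (A *v x) y"
    unfolding cinner_def matrix_vector_mult_def
    by (simp only: vec_lambda_beta cnj_sum sum_distrib_right)
  finally show ?thesis .
qed

lemma herm_inner:
  assumes "hermitian A" shows "x \<bullet> (A *v y) = (A *v x) \<bullet> y"
  by (metis assms herm_cinner re_cinner)

lemma mv_linear: "linear (\<lambda>x. (A::complex^'n^'m) *v x)"
  by simp

lemma mv_scaleR: "(A::complex^'n^'m) *v (t *\<^sub>R x) = t *\<^sub>R (A *v x)"
  using linear_scale[OF mv_linear] by blast

lemma mv_add: "(A::complex^'n^'m) *v (x + y) = A *v x + A *v y"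
  using linear_add[OF mv_linear] by blast

lemma mv_diff: "(A::complex^'n^'m) *v (x - y) = A *v x - A *v y"
  using linear_diff[OF mv_linear] by blast

lemma ofreal_smult: "complex_of_real t *s (x::complex^'n) = t *\<^sub>R x"
proof (rule vec_eq_iff[THEN iffD2], rule allI)
  fix i
  have "(t *\<^sub>R x)$i = t *\<^sub>R (x$i)" by (rule vector_scaleR_component)
  thus "(complex_of_real t *s x)$i = (t *\<^sub>R x)$i"
    by (metis scaleR_conv_of_real vector_smult_component)
qed

lemma smult_cancel:
  assumes "a *s x = b *s (x::complex^'n)" "x \<noteq> 0" shows "a = b"
using assms by simp

lemma mat_mv: "mat c *v (x::complex^'n) = c *s x"
  by (simp add: vec_eq_iff matrix_vector_mult_def mat_def if_distrib if_distribR cong: if_cong)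


lemma herm_sub_mat: "hermitian A \<Longrightarrow> hermitian (A - mat (complex_of_real m))"
  unfolding hermitian_def
proof (intro allI)
  fix i j assume h: "\<forall>i j. A $ i $ j = cnj (A $ j $ i)"
  have "A $ i $ j = cnj (A $ j $ i)" using h by blast
  moreover have "(mat (complex_of_real m) :: complex^'a^'a) $ i $ j = cnj ((mat (complex_of_real m) :: complex^'a^'a) $ j $ i)"
    by (simp add: mat_def)
  ultimately show "(A - mat (complex_of_real m)) $ i $ j = cnj ((A - mat (complex_of_real m)) $ j $ i)"
    by simp
qed

lemma psd_zero:
  fixes B :: "complex^'n^'n"
  assumes herm: "hermitian B" and sub: "subspace K" and inv: "\<forall>x\<in>K. B *v x \<in> K"
    and psd: "\<forall>x\<in>K. 0 \<le> x \<bullet> (B *v x)" and phi: "\<phi> \<in> K" and z: "\<phi> \<bullet> (B *v \<phi>) = 0"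
  shows "B *v \<phi> = 0"
proof -
  define h where "h = B *v \<phi>"
  have hK: "h \<in> K" using inv phi h_def by auto
  define a where "a = h \<bullet> (B *v h)"
  define b where "b = h \<bullet> h"
  have a0: "0 \<le> a" using psd hK a_def by auto
  have "\<phi> \<bullet> (B *v h) = h \<bullet> h" using herm_inner[OF herm] h_def by simp
  have exp: "(\<phi> + t *\<^sub>R h) \<bullet> (B *v (\<phi> + t *\<^sub>R h)) = 2 * t * b + t^2 * a" for t
  proof -
    have "(\<phi> + t *\<^sub>R h) \<bullet> (B *v (\<phi> + t *\<^sub>R h)) =
       \<phi> \<bullet> (B *v \<phi>) + t * (\<phi> \<bullet> (B *v h)) + t * (h \<bullet> (B *v \<phi>)) + t * t * (h \<bullet> (B *v h))"
      by (simp add: mv_add mv_scaleR inner_add_left inner_add_right algebra_simps)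
    also have "\<dots> = 2 * t * b + t^2 * a"
      using z \<open>\<phi> \<bullet> (B *v h) = h \<bullet> h\<close> unfolding a_def b_def h_def by (simp add: power2_eq_square)
    finally show ?thesis .
  qed
  have ge: "0 \<le> 2 * t * b + t^2 * a" for t
    using psd exp[of t] sub phi hK by (metis subspace_add subspace_scale)
  have "b = 0"
  proof (rule ccontr)
    assume "b \<noteq> 0"
    hence bp: "b > 0" using b_def by simp
    define t where "t = - b / (a + 1)"
    have "0 \<le> (2 * t * b + t^2 * a) * (a+1)^2" using ge[of t] a0 by simp
    also have "\<dots> = 2*b*(t*(a+1))*(a+1) + a*(t*(a+1))^2"
      by (simp add: power2_eq_square algebra_simps)
    also have "t*(a+1) = -b" unfolding t_def using a0 by (simp add: field_simps)
    also have "2*b*(-b)*(a+1) + a*(-b)^2 = - (b^2) * (a + 2)"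
      by (simp add: power2_eq_square algebra_simps)
    also have "\<dots> < 0" using bp a0 by (simp add: mult_pos_pos)
    finally show False by simp
  qed
  thus ?thesis using b_def h_def by simp
qed

lemma eig:
  fixes A :: "complex^'n^'n"
  assumes herm: "hermitian A" and sub: "subspace K" and inv: "\<forall>x\<in>K. A *v x \<in> K"
    and ne: "x0 \<in> K" "x0 \<noteq> 0"
  shows "\<exists>\<phi> m. \<phi> \<in> K \<and> norm \<phi> = 1 \<and> A *v \<phi> = complex_of_real m *s \<phi> \<and>
           (\<forall>x\<in>K. m * (x \<bullet> x) \<le> x \<bullet> (A *v x))"
proof -
  define S where "S = K \<inter> sphere 0 1"
  have cS: "compact S" unfolding S_def
    by (intro closed_Int_compact closed_subspace sub compact_sphere)
  have "x0 /\<^sub>R norm x0 \<in> S" using ne sub unfolding S_def by (simp add: subspace_scale)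
  hence neS: "S \<noteq> {}" by blast
  have cont: "continuous_on S (\<lambda>x. x \<bullet> (A *v x))"
    by (intro continuous_intros linear_continuous_on) simp
  obtain \<phi> where phiS: "\<phi> \<in> S" and mn: "\<forall>y\<in>S. \<phi> \<bullet> (A *v \<phi>) \<le> y \<bullet> (A *v y)"
    using continuous_attains_inf[OF cS neS cont] by blast
  define m where "m = \<phi> \<bullet> (A *v \<phi>)"
  have bound: "\<forall>x\<in>K. m * (x \<bullet> x) \<le> x \<bullet> (A *v x)"
  proof
    fix x assume xK: "x \<in> K"
    show "m * (x \<bullet> x) \<le> x \<bullet> (A *v x)"
    proof (cases "x = 0")
      case True thus ?thesis by simp
    next
      case False
      define y where "y = x /\<^sub>R norm x"
      have "y \<in> S" using False xK sub unfolding S_def y_def by (simp add: subspace_scale)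
      hence "m \<le> y \<bullet> (A *v y)" using mn m_def by auto
      also have "y \<bullet> (A *v y) = (x \<bullet> (A *v x)) / (norm x)^2"
        unfolding y_def by (simp add: mv_scaleR power2_eq_square divide_simps)
      finally have "m * (norm x)^2 \<le> x \<bullet> (A *v x)" using False by (simp add: divide_simps)
      thus ?thesis by (simp add: power2_norm_eq_inner)
    qed
  qed
  define B where "B = A - mat (complex_of_real m)"
  have hB: "hermitian B" unfolding B_def by (rule herm_sub_mat[OF herm])
  have Bx: "B *v x = A *v x - m *\<^sub>R x" for x
    unfolding B_def by (simp add: matrix_vector_mult_diff_rdistrib mat_mv ofreal_smult)
  have invB: "\<forall>x\<in>K. B *v x \<in> K" using inv sub Bx by (simp add: subspace_diff subspace_scale)
  have psdB: "\<forall>x\<in>K. 0 \<le> x \<bullet> (B *v x)" using bound Bx by (simp add: inner_diff_right)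
  have phiK: "\<phi> \<in> K" and n1: "norm \<phi> = 1" using phiS S_def by auto
  have "\<phi> \<bullet> \<phi> = 1" using n1 by (simp add: power2_norm_eq_inner[symmetric])
  hence "\<phi> \<bullet> (B *v \<phi>) = 0" using Bx m_def by (simp add: inner_diff_right)
  hence "B *v \<phi> = 0" using psd_zero[OF hB sub invB psdB phiK] by simp
  hence "A *v \<phi> = m *\<^sub>R \<phi>" using Bx by simp
  hence "A *v \<phi> = complex_of_real m *s \<phi>" by (simp add: ofreal_smult)
  thus ?thesis using phiK n1 bound by blast
qed


lemma mv_scaleR_mat: "(t *\<^sub>R (A::complex^'n^'m)) *v x = t *\<^sub>R (A *v x)"
  by (simp add: vec_eq_iff matrix_vector_mult_def scaleR_sum_right)

lemma mv_sum_mat: "(\<Sum>i\<in>I. (f i::complex^'n^'m)) *v x = (\<Sum>i\<in>I. f i *v x)"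
proof (induction I rule: infinite_finite_induct)
  case (infinite I) thus ?case by (simp add: vec_eq_iff matrix_vector_mult_def)
next
  case empty thus ?case by (simp add: vec_eq_iff matrix_vector_mult_def)
next
  case (insert i I) thus ?case by (simp add: matrix_vector_mult_add_rdistrib)
qed

definition wK :: "('v::euclidean_space \<Rightarrow> complex^'n^'n) \<Rightarrow> (complex^'n) set \<Rightarrow> 'v set" where
  "wK \<iota> K = {\<alpha>. \<exists>\<phi>\<in>K. \<phi> \<noteq> 0 \<and> (\<forall>u. \<iota> u *v \<phi> = complex_of_real (\<alpha> \<bullet> u) *s \<phi>)}"

lemma wK_mono: "K1 \<subseteq> K \<Longrightarrow> wK \<iota> K1 \<subseteq> wK \<iota> K"
  unfolding wK_def by blast

lemma scalar_case:
  fixes \<iota> :: "'v::euclidean_space \<Rightarrow> complex^'n^'n"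
  assumes lin: "linear \<iota>" and M: "\<forall>u. \<iota> u *v \<phi> = M u *\<^sub>R \<phi>"
  shows "\<iota> u *v \<phi> = ((\<Sum>b\<in>Basis. M b *\<^sub>R b) \<bullet> u) *\<^sub>R \<phi>"
proof -
  have "\<iota> u = \<iota> (\<Sum>b\<in>Basis. (u \<bullet> b) *\<^sub>R b)" by (simp add: euclidean_representation)
  also have "\<dots> = (\<Sum>b\<in>Basis. (u \<bullet> b) *\<^sub>R \<iota> b)"
    by (simp add: linear_sum[OF lin] linear_scale[OF lin] o_def)
  finally have "\<iota> u *v \<phi> = (\<Sum>b\<in>Basis. (u \<bullet> b) *\<^sub>R (\<iota> b *v \<phi>))"
    by (simp add: mv_sum_mat mv_scaleR_mat)
  also have "\<dots> = (\<Sum>b\<in>Basis. ((u \<bullet> b) * M b) *\<^sub>R \<phi>)" using M by simp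
  also have "\<dots> = (\<Sum>b\<in>Basis. (u \<bullet> b) * M b) *\<^sub>R \<phi>" by (simp add: scaleR_sum_left)
  also have "(\<Sum>b\<in>Basis. (u \<bullet> b) * M b) = (\<Sum>b\<in>Basis. M b *\<^sub>R b) \<bullet> u"
    unfolding inner_sum_left by (rule sum.cong) (simp_all add: inner_commute)
  finally show ?thesis .
qed


lemma dec:
  fixes \<iota> :: "'v::euclidean_space \<Rightarrow> complex^'n^'n"
  assumes ft: "functional_theory \<iota> W" and ab: "abelian \<iota>"
  shows "subspace K \<Longrightarrow> (\<forall>u. \<forall>x\<in>K. \<iota> u *v x \<in> K) \<Longrightarrow> \<phi> \<in> K \<Longrightarrow> \<phi> \<noteq> 0 \<Longrightarrow>
    \<exists>x \<in> convex hull (wK \<iota> K). \<forall>u. \<phi> \<bullet> (\<iota> u *v \<phi>) = (\<phi> \<bullet> \<phi>) * (x \<bullet> u)"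
proof (induction "dim K" arbitrary: K \<phi> rule: less_induct)
  case less
  note sub = less.prems(1) and inv = less.prems(2) and phiK = less.prems(3) and phi0 = less.prems(4)
  have lin: "linear \<iota>" and herm: "\<And>u. hermitian (\<iota> u)" using ft unfolding functional_theory_def by auto
  have comm: "\<iota> u *v (\<iota> u' *v y) = \<iota> u' *v (\<iota> u *v y)" for u u' y
    using ab unfolding abelian_def by (simp add: matrix_vector_mul_assoc)
  show ?case
  proof (cases "\<forall>u. \<exists>m::real. \<forall>y\<in>K. \<iota> u *v y = m *\<^sub>R y")
    case True
    then obtain M where M: "\<forall>u. \<forall>y\<in>K. \<iota> u *v y = M u *\<^sub>R y" by metis
    define \<alpha> where "\<alpha> = (\<Sum>b\<in>Basis. M b *\<^sub>R b)"
    have ev: "\<iota> u *v \<phi> = (\<alpha> \<bullet> u) *\<^sub>R \<phi>" for u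
      unfolding \<alpha>_def by (rule scalar_case[OF lin]) (use M phiK in auto)
    have "\<alpha> \<in> wK \<iota> K" unfolding wK_def using phiK phi0 ev by (auto simp: ofreal_smult)
    hence "\<alpha> \<in> convex hull (wK \<iota> K)" by (rule hull_inc)
    moreover have "\<forall>u. \<phi> \<bullet> (\<iota> u *v \<phi>) = (\<phi> \<bullet> \<phi>) * (\<alpha> \<bullet> u)" using ev by simp
    ultimately show ?thesis by blast
  next
    case False
    then obtain u where nsc: "\<forall>m::real. \<exists>y\<in>K. \<iota> u *v y \<noteq> m *\<^sub>R y" by blast
    obtain \<phi>0 m where phi0K: "\<phi>0 \<in> K" and n1: "norm \<phi>0 = 1"
      and ev0: "\<iota> u *v \<phi>0 = complex_of_real m *s \<phi>0"
      using eig[OF herm sub _ phiK phi0] inv by blast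
    define K1 where "K1 = {y\<in>K. \<iota> u *v y = m *\<^sub>R y}"
    define K2 where "K2 = {y\<in>K. \<forall>z\<in>K1. z \<bullet> y = 0}"
    have sub1: "subspace K1" using sub unfolding K1_def subspace_def
      by (auto simp: mv_add mv_scaleR algebra_simps)
    have sub2: "subspace K2" using sub unfolding K2_def subspace_def
      by (auto simp: inner_add_right)
    have K1K: "K1 \<subseteq> K" and K2K: "K2 \<subseteq> K" unfolding K1_def K2_def by auto
    have inv1: "\<forall>u'. \<forall>x\<in>K1. \<iota> u' *v x \<in> K1"
      using inv comm unfolding K1_def by (auto simp: mv_scaleR)
    have inv2: "\<forall>u'. \<forall>x\<in>K2. \<iota> u' *v x \<in> K2"
    proof (intro allI ballI)
      fix u' x assume xK2: "x \<in> K2"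
      have "z \<bullet> (\<iota> u' *v x) = 0" if "z \<in> K1" for z
        using herm_inner[OF herm, of z u' x] inv1 that xK2 unfolding K2_def by auto
      thus "\<iota> u' *v x \<in> K2" using xK2 inv unfolding K2_def by auto
    qed
    have phi0K1: "\<phi>0 \<in> K1" using phi0K ev0 unfolding K1_def by (simp add: ofreal_smult)
    have "\<phi>0 \<noteq> 0" using n1 by auto
    have d1: "dim K1 < dim K"
    proof (rule dim_psubset)
      obtain y where "y \<in> K" "\<iota> u *v y \<noteq> m *\<^sub>R y" using nsc by blast
      hence "K1 \<subset> K" using K1K unfolding K1_def by blast
      thus "span K1 \<subset> span K" using sub sub1 by (metis span_eq_iff)
    qed
    have d2: "dim K2 < dim K"
    proof (rule dim_psubset)
      have "\<phi>0 \<bullet> \<phi>0 \<noteq> 0" using \<open>\<phi>0 \<noteq> 0\<close> by simp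
      hence "\<phi>0 \<notin> K2" using phi0K1 unfolding K2_def by blast
      hence "K2 \<subset> K" using K2K phi0K by blast
      thus "span K2 \<subset> span K" using sub sub2 by (metis span_eq_iff)
    qed
    obtain p q where pK1': "p \<in> span K1" and qo: "\<And>w. w \<in> span K1 \<Longrightarrow> orthogonal q w"
      and pq: "\<phi> = p + q"
      using orthogonal_subspace_decomp_exists[of K1 \<phi>] by metis
    have pK1: "p \<in> K1" using pK1' sub1 by (metis span_eq_iff)
    have "q = \<phi> - p" using pq by simp
    hence qK: "q \<in> K" using subspace_diff[OF sub phiK] pK1 K1K by blast
    have "z \<bullet> q = 0" if "z \<in> K1" for z
      using qo[OF span_base[OF that]] unfolding orthogonal_def by (simp add: inner_commute)
    hence qK2: "q \<in> K2" using qK unfolding K2_def by blast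
    have pq0: "p \<bullet> q = 0" using qK2 pK1 unfolding K2_def by auto
    have expand: "\<phi> \<bullet> (\<iota> u' *v \<phi>) = p \<bullet> (\<iota> u' *v p) + q \<bullet> (\<iota> u' *v q)" for u'
    proof -
      have a: "q \<bullet> (\<iota> u' *v p) = 0" using qK2 inv1 pK1 unfolding K2_def
        by (auto simp: inner_commute)
      have "p \<bullet> (\<iota> u' *v q) = (\<iota> u' *v p) \<bullet> q" by (rule herm_inner[OF herm])
      also have "\<dots> = q \<bullet> (\<iota> u' *v p)" by (rule inner_commute)
      finally have b: "p \<bullet> (\<iota> u' *v q) = 0" using a by simp
      show ?thesis unfolding pq using a b by (simp add: mv_add inner_add_left inner_add_right)
    qed
    have nn: "\<phi> \<bullet> \<phi> = p \<bullet> p + q \<bullet> q" unfolding pq using pq0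
      by (simp add: inner_add_left inner_add_right inner_commute)
    have H1: "wK \<iota> K1 \<subseteq> wK \<iota> K" "wK \<iota> K2 \<subseteq> wK \<iota> K"
      using wK_mono[OF K1K, of \<iota>] wK_mono[OF K2K, of \<iota>] by auto
    show ?thesis
    proof (cases "p = 0")
      case True
      hence "q \<noteq> 0" "\<phi> = q" using pq phi0 by auto
      then obtain x where "x \<in> convex hull (wK \<iota> K2)" "\<forall>u. q \<bullet> (\<iota> u *v q) = (q \<bullet> q) * (x \<bullet> u)"
        using less.hyps[OF d2 sub2 inv2 qK2] by blast
      thus ?thesis using hull_mono[OF H1(2)] \<open>\<phi> = q\<close> by blast
    next
      case pn: False
      show ?thesis
      proof (cases "q = 0")
        case True
        hence "\<phi> = p" using pq by auto
        then obtain x where "x \<in> convex hull (wK \<iota> K1)" "\<forall>u. p \<bullet> (\<iota> u *v p) = (p \<bullet> p) * (x \<bullet> u)"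
          using less.hyps[OF d1 sub1 inv1 pK1] pn by blast
        thus ?thesis using hull_mono[OF H1(1)] \<open>\<phi> = p\<close> by blast
      next
        case qn: False
        obtain x1 where x1: "x1 \<in> convex hull (wK \<iota> K)" "\<forall>u. p \<bullet> (\<iota> u *v p) = (p \<bullet> p) * (x1 \<bullet> u)"
          using less.hyps[OF d1 sub1 inv1 pK1 pn] hull_mono[OF H1(1)] by blast
        obtain x2 where x2: "x2 \<in> convex hull (wK \<iota> K)" "\<forall>u. q \<bullet> (\<iota> u *v q) = (q \<bullet> q) * (x2 \<bullet> u)"
          using less.hyps[OF d2 sub2 inv2 qK2 qn] hull_mono[OF H1(2)] by blast
        define P where "P = p \<bullet> p"
        define Q where "Q = q \<bullet> q"
        have P0: "P > 0" "Q > 0" using pn qn P_def Q_def by auto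
        define x where "x = (P / (P + Q)) *\<^sub>R x1 + (Q / (P + Q)) *\<^sub>R x2"
        have "x \<in> convex hull (wK \<iota> K)" unfolding x_def
        proof (rule convexD[OF convex_convex_hull x1(1) x2(1)])
          show "0 \<le> P / (P + Q)" "0 \<le> Q / (P + Q)" using P0 by simp_all
          have "P + Q \<noteq> 0" using P0 by simp
          thus "P / (P + Q) + Q / (P + Q) = 1" by (simp add: add_divide_distrib[symmetric])
        qed
        moreover have "\<forall>u. \<phi> \<bullet> (\<iota> u *v \<phi>) = (\<phi> \<bullet> \<phi>) * (x \<bullet> u)"
        proof
          fix u'
          have "\<phi> \<bullet> (\<iota> u' *v \<phi>) = P * (x1 \<bullet> u') + Q * (x2 \<bullet> u')"
            using expand x1(2) x2(2) P_def Q_def by simp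
          also have "\<dots> = (P + Q) * (x \<bullet> u')"
          proof -
            have nz: "P + Q \<noteq> 0" using P0 by simp
            have "x \<bullet> u' = P / (P + Q) * (x1 \<bullet> u') + Q / (P + Q) * (x2 \<bullet> u')"
              unfolding x_def by (simp add: inner_add_left)
            moreover have e1: "(P + Q) * (P / (P + Q)) = P" using nz by simp
            moreover have e2: "(P + Q) * (Q / (P + Q)) = Q" using nz by simp
            ultimately show ?thesis by (simp only: distrib_left mult.assoc[symmetric])
          qed
          finally show "\<phi> \<bullet> (\<iota> u' *v \<phi>) = (\<phi> \<bullet> \<phi>) * (x \<bullet> u')" using nn P_def Q_def by simp
        qed
        ultimately show ?thesis by blast
      qed
    qed
  qed
qed


lemma geom:
  fixes \<Omega> :: "'v::euclidean_space set"
  assumes O0: "\<Omega>0 \<subseteq> \<Omega>" "\<Omega>0 \<subseteq> {\<alpha>. \<alpha> \<bullet> w = c}" and beta: "\<beta> \<in> \<Omega>" "\<beta> \<bullet> w \<noteq> c"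
    and rho: "\<rho> \<in> convex hull \<Omega>0"
  shows "\<exists>S. S \<subseteq> \<Omega> \<and> int (card S) = aff_dim (convex hull \<Omega>) \<and> \<rho> \<in> convex hull S"
proof -
  obtain T where T: "finite T" "T \<subseteq> \<Omega>0" "int (card T) \<le> aff_dim \<Omega>0 + 1" "\<rho> \<in> convex hull T"
    using rho caratheodory_aff_dim[of \<Omega>0] by blast
  have "affine hull \<Omega>0 \<subseteq> {\<alpha>. \<alpha> \<bullet> w = c}"
  proof -
    have e: "{\<alpha>. \<alpha> \<bullet> w = c} = {\<alpha>. w \<bullet> \<alpha> = c}" by (simp add: inner_commute)
    show ?thesis unfolding e using O0(2)[unfolded e] affine_hyperplane[of w c] by (rule hull_minimal)
  qed
  hence "\<beta> \<notin> affine hull \<Omega>0" using beta by auto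
  moreover have "\<beta> \<in> affine hull \<Omega>" using beta by (simp add: hull_inc)
  moreover have "affine hull \<Omega>0 \<subseteq> affine hull \<Omega>" using O0 by (simp add: hull_mono)
  ultimately have "affine hull \<Omega>0 \<subset> affine hull \<Omega>" by blast
  hence lt: "aff_dim \<Omega>0 < aff_dim \<Omega>" by (rule aff_dim_psubset)
  define d where "d = aff_dim \<Omega>"
  have dcv: "aff_dim (convex hull \<Omega>) = d" by (simp add: d_def aff_dim_convex_hull)
  have d0: "d \<ge> 0" using lt aff_dim_geq[of \<Omega>0] d_def by linarith
  have cT: "card T \<le> nat d" using T(3) lt d_def by linarith
  have TO: "T \<subseteq> \<Omega>" using T O0 by auto
  define k where "k = nat d - card T"
  obtain R where R: "R \<subseteq> \<Omega> - T" "card R = k" "finite R"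
  proof (cases "finite \<Omega>")
    case True
    have "aff_dim \<Omega> \<le> int (card \<Omega>) - 1" using aff_dim_le_card[OF True] by simp
    hence "nat d < card \<Omega>" using d_def d0 by linarith
    moreover have "card (\<Omega> - T) = card \<Omega> - card T" using TO T(1) by (simp add: card_Diff_subset)
    ultimately have "k \<le> card (\<Omega> - T)" unfolding k_def by linarith
    thus ?thesis using obtain_subset_with_card_n that by metis
  next
    case False
    hence "\<not> finite (\<Omega> - T)" using T(1) by auto
    thus ?thesis using infinite_arbitrarily_large that by metis
  qed
  define S where "S = T \<union> R"
  have "T \<inter> R = {}" using R by auto
  hence "card S = card T + k" unfolding S_def using R T(1) by (simp add: card_Un_disjoint)
  hence "int (card S) = d" unfolding k_def using cT d0 by linarith
  moreover have "S \<subseteq> \<Omega>" using TO R unfolding S_def by auto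
  moreover have "\<rho> \<in> convex hull S" using T(4) hull_mono[of T S] unfolding S_def by auto
  ultimately show ?thesis using dcv by metis
qed

lemma ground_var:
  fixes A :: "complex^'n^'n"
  assumes herm: "hermitian A" and gs: "\<psi> \<in> pure_ground_states A"
  shows "\<exists>E. A *v \<psi> = E *\<^sub>R \<psi> \<and> \<psi> \<bullet> \<psi> = 1 \<and> (\<forall>(x::complex^'n). E * (x \<bullet> x) \<le> x \<bullet> (A *v x)) \<and>
     (\<forall>(x::complex^'n). x \<bullet> x = 1 \<longrightarrow> x \<bullet> (A *v x) = E \<longrightarrow> A *v x = E *\<^sub>R x)"
proof -
  obtain E where n: "cinner \<psi> \<psi> = 1" and ev: "A *v \<psi> = complex_of_real E *s \<psi>"
    and low: "\<forall>\<phi> E'::complex. \<phi> \<noteq> 0 \<longrightarrow> A *v \<phi> = E' *s \<phi> \<longrightarrow> E \<le> Re E'"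
    using gs unfolding pure_ground_states_def by blast
  have nn: "\<psi> \<bullet> \<psi> = 1" using n re_cinner[of \<psi> \<psi>] by simp
  hence "\<psi> \<noteq> 0" by auto
  obtain \<phi> m where "\<phi> \<in> UNIV" and n1: "norm \<phi> = 1" and evm: "A *v \<phi> = complex_of_real m *s \<phi>"
     and bd: "\<forall>x\<in>UNIV. m * (x \<bullet> x) \<le> x \<bullet> (A *v x)"
    using eig[OF herm subspace_UNIV _ UNIV_I \<open>\<psi> \<noteq> 0\<close>] UNIV_I by metis
  have "\<phi> \<noteq> 0" using n1 by auto
  hence "E \<le> Re (complex_of_real m)" using low evm by blast
  hence "E \<le> m" by simp
  have bd2: "\<forall>x. E * (x \<bullet> x) \<le> x \<bullet> (A *v x)"
  proof
    fix x :: "complex^'n"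
    have "E * (x \<bullet> x) \<le> m * (x \<bullet> x)" using \<open>E \<le> m\<close> by (simp add: mult_right_mono)
    moreover have "m * (x \<bullet> x) \<le> x \<bullet> (A *v x)" using bd by blast
    ultimately show "E * (x \<bullet> x) \<le> x \<bullet> (A *v x)" by (rule order_trans)
  qed
  define B where "B = A - mat (complex_of_real E)"
  have hB: "hermitian B" unfolding B_def by (rule herm_sub_mat[OF herm])
  have Bx: "B *v x = A *v x - E *\<^sub>R x" for x
    unfolding B_def by (simp add: matrix_vector_mult_diff_rdistrib mat_mv ofreal_smult)
  have psdB: "\<forall>x\<in>UNIV. 0 \<le> x \<bullet> (B *v x)"
  proof
    fix x :: "complex^'n"
    have "E * (x \<bullet> x) \<le> x \<bullet> (A *v x)" using bd2 by blast
    thus "0 \<le> x \<bullet> (B *v x)" unfolding Bx by (simp add: inner_diff_right)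
  qed
  have V2: "\<forall>x. x \<bullet> x = 1 \<longrightarrow> x \<bullet> (A *v x) = E \<longrightarrow> A *v x = E *\<^sub>R x"
  proof (intro allI impI)
    fix x assume "x \<bullet> x = 1" "x \<bullet> (A *v x) = E"
    hence "x \<bullet> (B *v x) = 0" using Bx by (simp add: inner_diff_right)
    hence "B *v x = 0" using psd_zero[OF hB subspace_UNIV _ psdB] by simp
    thus "A *v x = E *\<^sub>R x" using Bx by simp
  qed
  have "A *v \<psi> = E *\<^sub>R \<psi>" using ev by (simp only: ofreal_smult)
  thus ?thesis using nn bd2 V2 by blast
qed


lemma herm_add: "hermitian A \<Longrightarrow> hermitian B \<Longrightarrow> hermitian (A + B)"
  unfolding hermitian_def
proof (intro allI)
  fix i j assume ha: "\<forall>i j. A $ i $ j = cnj (A $ j $ i)" and hb: "\<forall>i j. B $ i $ j = cnj (B $ j $ i)"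
  have "A $ i $ j = cnj (A $ j $ i)" "B $ i $ j = cnj (B $ j $ i)" using ha hb by blast+
  thus "(A + B) $ i $ j = cnj ((A + B) $ j $ i)" by simp
qed

theorem corollary4p19:
  fixes \<iota> :: "'v::euclidean_space \<Rightarrow> complex^'n^'n" and W :: "complex^'n^'n" and \<rho> :: 'v
  assumes "functional_theory \<iota> W"
    and "abelian \<iota>"
    and "\<rho> \<in> convex hull (weights \<iota>)"
    and "pure_v_representable \<iota> W \<rho>"
    and "\<forall>S. S \<subseteq> weights \<iota> \<and> int (card S) = aff_dim (convex hull (weights \<iota>))
           \<longrightarrow> \<rho> \<notin> convex hull S"
  shows "uniquely_v_representable \<iota> W \<rho>"
proof -
  note ft = assms(1) and ab = assms(2)
  have lin: "linear \<iota>" and herm: "\<And>u. hermitian (\<iota> u)" and hW: "hermitian W"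
    using ft unfolding functional_theory_def by auto
  have comm: "\<iota> u *v (\<iota> u' *v y) = \<iota> u' *v (\<iota> u *v y)" for u u' y
    using ab unfolding abelian_def by (simp add: matrix_vector_mul_assoc)
  obtain v where rv: "pure_v_rep_by \<iota> W \<rho> v" using assms(4) unfolding pure_v_representable_def by blast
  then obtain \<psi> where psiG: "\<psi> \<in> Gp \<iota> W v" and dpsi: "dual_pure \<iota> \<psi> \<rho>"
    unfolding pure_v_rep_by_def by blast
  have dual_re: "dual_pure \<iota> \<xi> \<rho> \<Longrightarrow> \<rho> \<bullet> u = \<xi> \<bullet> (\<iota> u *v \<xi>)" for \<xi> u
    unfolding dual_pure_def using re_cinner by (metis Re_complex_of_real)
  have "\<exists>c::complex. \<iota> v' - \<iota> v = mat c" if rv': "pure_v_rep_by \<iota> W \<rho> v'" for v'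
  proof -
    obtain \<psi>' where psiG': "\<psi>' \<in> Gp \<iota> W v'" and dpsi': "dual_pure \<iota> \<psi>' \<rho>"
      using rv' unfolding pure_v_rep_by_def by blast
    have hv: "hermitian (\<iota> v + W)" "hermitian (\<iota> v' + W)" using herm hW by (auto intro: herm_add)
    obtain E where ev: "(\<iota> v + W) *v \<psi> = E *\<^sub>R \<psi>" and n: "\<psi> \<bullet> \<psi> = 1"
      and lowE: "\<forall>(x::complex^'n). E * (x \<bullet> x) \<le> x \<bullet> ((\<iota> v + W) *v x)"
      and V2: "\<forall>(x::complex^'n). x \<bullet> x = 1 \<longrightarrow> x \<bullet> ((\<iota> v + W) *v x) = E \<longrightarrow> (\<iota> v + W) *v x = E *\<^sub>R x"
      using ground_var[OF hv(1)] psiG unfolding Gp_def by blast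
    obtain E' where ev': "(\<iota> v' + W) *v \<psi>' = E' *\<^sub>R \<psi>'" and n': "\<psi>' \<bullet> \<psi>' = 1"
      and lowE': "\<forall>(x::complex^'n). E' * (x \<bullet> x) \<le> x \<bullet> ((\<iota> v' + W) *v x)"
      using ground_var[OF hv(2)] psiG' unfolding Gp_def by blast
    have dec1: "\<iota> v + W = (\<iota> v' + W) + \<iota> (v - v')" using linear_diff[OF lin, of v v'] by simp
    have dec2: "\<iota> v' + W = (\<iota> v + W) + \<iota> (v' - v)" using linear_diff[OF lin, of v' v] by simp
    have "(\<iota> v + W) *v \<psi>' = (\<iota> v' + W) *v \<psi>' + \<iota> (v - v') *v \<psi>'"
      unfolding dec1 by (rule matrix_vector_mult_add_rdistrib)
    hence "\<psi>' \<bullet> ((\<iota> v + W) *v \<psi>') = \<psi>' \<bullet> (E' *\<^sub>R \<psi>') + \<psi>' \<bullet> (\<iota> (v - v') *v \<psi>')"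
      unfolding ev' by (simp only: inner_add_right)
    hence e1: "\<psi>' \<bullet> ((\<iota> v + W) *v \<psi>') = E' + \<rho> \<bullet> (v - v')"
      using n' dual_re[OF dpsi', of "v - v'"] by simp
    have "(\<iota> v' + W) *v \<psi> = (\<iota> v + W) *v \<psi> + \<iota> (v' - v) *v \<psi>"
      unfolding dec2 by (rule matrix_vector_mult_add_rdistrib)
    hence "\<psi> \<bullet> ((\<iota> v' + W) *v \<psi>) = \<psi> \<bullet> (E *\<^sub>R \<psi>) + \<psi> \<bullet> (\<iota> (v' - v) *v \<psi>)"
      unfolding ev by (simp only: inner_add_right)
    hence e2: "\<psi> \<bullet> ((\<iota> v' + W) *v \<psi>) = E + \<rho> \<bullet> (v' - v)"
      using n dual_re[OF dpsi, of "v' - v"] by simp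
    have i1: "E \<le> E' + \<rho> \<bullet> (v - v')" using lowE[rule_format, of \<psi>'] n' e1 by simp
    have i2: "E' \<le> E + \<rho> \<bullet> (v' - v)" using lowE'[rule_format, of \<psi>] n e2 by simp
    have "\<psi>' \<bullet> ((\<iota> v + W) *v \<psi>') = E" using e1 i1 i2 by (simp add: inner_diff_right)
    hence evv: "(\<iota> v + W) *v \<psi>' = E *\<^sub>R \<psi>'" using V2 n' by blast
    define w where "w = v' - v"
    define c where "c = E' - E"
    have iw: "\<iota> w = \<iota> v' - \<iota> v" unfolding w_def by (rule linear_diff[OF lin])
    have evw: "\<iota> w *v \<psi>' = c *\<^sub>R \<psi>'"
    proof -
      have "\<iota> w = (\<iota> v' + W) - (\<iota> v + W)" using iw by simp
      hence "\<iota> w *v \<psi>' = (\<iota> v' + W) *v \<psi>' - (\<iota> v + W) *v \<psi>'"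
        by (simp only: matrix_vector_mult_diff_rdistrib)
      thus ?thesis using ev' evv c_def by (simp add: scaleR_diff_left)
    qed
    define K where "K = {y. \<iota> w *v y = c *\<^sub>R y}"
    have subK: "subspace K" unfolding K_def subspace_def
      by (auto simp: mv_add mv_scaleR algebra_simps)
    have invK: "\<forall>u. \<forall>x\<in>K. \<iota> u *v x \<in> K" using comm unfolding K_def by (auto simp: mv_scaleR)
    have psiK: "\<psi>' \<in> K" using evw K_def by simp
    have psi0: "\<psi>' \<noteq> 0" using n' by auto
    obtain x0 where x0: "x0 \<in> convex hull (wK \<iota> K)" "\<forall>u. \<psi>' \<bullet> (\<iota> u *v \<psi>') = (\<psi>' \<bullet> \<psi>') * (x0 \<bullet> u)"
      using dec[OF ft ab subK invK psiK psi0] by blast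
    have "\<rho> = x0"
    proof -
      have "\<rho> \<bullet> u = x0 \<bullet> u" for u using x0(2) n' dual_re[OF dpsi'] by simp
      hence "(\<rho> - x0) \<bullet> (\<rho> - x0) = 0" by (simp add: inner_diff_left)
      thus ?thesis by simp
    qed
    hence rho0: "\<rho> \<in> convex hull (wK \<iota> K)" using x0 by simp
    have O1: "wK \<iota> K \<subseteq> weights \<iota>" unfolding wK_def weights_def by blast
    have O2: "wK \<iota> K \<subseteq> {\<alpha>. \<alpha> \<bullet> w = c}"
    proof
      fix \<alpha> assume "\<alpha> \<in> wK \<iota> K"
      then obtain \<phi> where "\<phi> \<in> K" "\<phi> \<noteq> 0" "\<iota> w *v \<phi> = complex_of_real (\<alpha> \<bullet> w) *s \<phi>"
        unfolding wK_def by blast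
      hence "complex_of_real (\<alpha> \<bullet> w) *s \<phi> = complex_of_real c *s \<phi>"
        unfolding K_def by (simp add: ofreal_smult)
      hence "complex_of_real (\<alpha> \<bullet> w) = complex_of_real c" using smult_cancel \<open>\<phi> \<noteq> 0\<close> by blast
      thus "\<alpha> \<in> {\<alpha>. \<alpha> \<bullet> w = c}" by simp
    qed
    show ?thesis
    proof (rule ccontr)
      assume nc: "\<not> (\<exists>c::complex. \<iota> v' - \<iota> v = mat c)"
      have "\<exists>y. y \<notin> K"
      proof (rule ccontr)
        assume "\<not> (\<exists>y. y \<notin> K)"
        hence "\<forall>y. \<iota> w *v y = mat (complex_of_real c) *v y"
          unfolding K_def by (simp add: mat_mv ofreal_smult)
        hence "\<iota> w = mat (complex_of_real c)" by (simp add: matrix_eq)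
        thus False using nc iw by metis
      qed
      then obtain y where yK: "y \<notin> K" by blast
      obtain p q where pK': "p \<in> span K" and qo: "\<And>z. z \<in> span K \<Longrightarrow> orthogonal q z"
        and pq: "y = p + q"
        using orthogonal_subspace_decomp_exists[of K y] by metis
      have pK: "p \<in> K" using pK' subK by (metis span_eq_iff)
      have q0: "q \<noteq> 0" using pq pK yK by auto
      define K2 where "K2 = {y. \<forall>z\<in>K. z \<bullet> y = 0}"
      have sub2: "subspace K2" unfolding K2_def subspace_def by (auto simp: inner_add_right)
      have inv2: "\<forall>u'. \<forall>x\<in>K2. \<iota> u' *v x \<in> K2"
      proof (intro allI ballI)
        fix u' x assume xK2: "x \<in> K2"
        have "z \<bullet> (\<iota> u' *v x) = 0" if "z \<in> K" for z
          using herm_inner[OF herm, of z u' x] invK that xK2 unfolding K2_def by auto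
        thus "\<iota> u' *v x \<in> K2" unfolding K2_def by auto
      qed
      have qK2: "q \<in> K2" using qo span_base unfolding K2_def orthogonal_def
        by (fastforce simp: inner_commute)
      obtain x2 where "x2 \<in> convex hull (wK \<iota> K2)"
        using dec[OF ft ab sub2 inv2 qK2 q0] by blast
      hence "wK \<iota> K2 \<noteq> {}" by auto
      then obtain \<beta> \<phi> where phiK2: "\<phi> \<in> K2" and phn: "\<phi> \<noteq> 0"
        and evb: "\<forall>u. \<iota> u *v \<phi> = complex_of_real (\<beta> \<bullet> u) *s \<phi>"
        unfolding wK_def by blast
      have bW: "\<beta> \<in> weights \<iota>" unfolding weights_def using phn evb by blast
      have bw: "\<beta> \<bullet> w \<noteq> c"
      proof
        assume "\<beta> \<bullet> w = c"
        hence "\<phi> \<in> K" using evb unfolding K_def by (simp add: ofreal_smult)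
        hence "\<phi> \<bullet> \<phi> = 0" using phiK2 unfolding K2_def by blast
        thus False using phn by simp
      qed
      obtain S where "S \<subseteq> weights \<iota>" "int (card S) = aff_dim (convex hull (weights \<iota>))"
        "\<rho> \<in> convex hull S"
        using geom[OF O1 O2 bW bw rho0] by blast
      thus False using assms(5) by blast
    qed
  qed
  thus ?thesis unfolding uniquely_v_representable_def using rv by blast
qed

end
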